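(* Consider the unconstrained variational inequality problem of finding $x^*\in\mathbb{R}^d$ with $F(x^* )=0$ for a single-valued operator $F:\mathbb{R}^d\to\mathbb{R}^d$, under the following assumptions: (i) the solution set $\mathcal{X}^*$ is non-empty and there exist $x^*\in\mathcal{X}^*$ and $R\in\mathbb{R}$ with $\|x^*\|\le R$; (ii) $F$ is $\lambda$-weak $\mu$-quasi strongly monotone with $\lambda\ge 0$, $\mu>0$, i.e. $\langle F(x),x-x^*\rangle\ge \mu\|x-x^*\|^2-\lambda$ for all $x\in\mathbb{R}^d$ and some $x^*\in\mathcal{X}^*$; (iii) when SEG is run, $F$ is $L$-Lipschitz, and when SGDA is run, $F$ has at most $B$-linear growth, $\|F(x)\|\le B(1+\|x\|)$ for all $x$; (iv) the algorithm accesses a stochastic oracle returning $F_t=F(x_t)+U_t(x_t)$, where $(U_t(\cdot))_{t\ge0}$ are i.i.d. random fields adapted to a filtration $(\mathcal{F}_t)$ with $\mathbb{E}[U_t(x)\mid\mathcal{F}_t]=0$ and $\mathbb{E}[\|U_t(x)\|^2\mid\mathcal{F}_t]\le\sigma^2$ for all $x$; (v) $U_t(x)=U_t^a(x)+U_t^b(x)$ where $U_t^a(x)$ has a Lebesgue density $p_{U_t^a(x)}$ with $\inf_{x\in C}p_{U_t^a(x)}(t)>0$ for every bounded $C\subseteq\mathbb{R}^d$ and every $t\in\mathbb{R}^d$. Let the iterates be generated either by SGDA, $x_{t+1}=x_t-\gamma(F(x_t)+U_t(x_t))$ with $\gamma<\mu/B^2$, or by SEG, $x_{t+1/2}=x_t-\gamma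 F_t$, $x_{t+1}=x_t-\alpha\gamma F_{t+1/2}$ with $\gamma<1/(2\mu+\sqrt{3}L)$ and $\alpha\in(0,1)$. Then the function $V:\mathbb{R}^d\to\mathbb{R}$, $V(x)=\|x-x^*\|^2+1$, satisfies the following geometric drift property for the Markov chain $(x_t)_{t\ge0}$: there exist a measurable set $C$ and constants $\beta>0$, $b<\infty$ such that \[ \Delta V(x)\le -\beta V(x)+b\,\mathbf{1}_C(x)\quad\text{for all }x\in\mathbb{R}^d, \] where $\Delta V(x)=\int_{y\in\mathbb{R}^d}P(x,dy)V(y)-V(x)$ and $P$ is the (time-homogeneous) transition kernel of the chain.
   Context: SGDA = stochastic gradient descent ascent; SEG = stochastic extragradient (double step-size). The transition kernel is $P(x,S)=\Pr[x_{t+1}\in S\mid x_t=x]$. This property is the (V4) geometric drift condition of Meyn and Tweedie. *)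

theory Defs
  imports "HOL-Probability.Probability"
begin

text \<open>Time-homogeneous transition kernel of SGDA: one i.i.d. noise draw per step,
  the noise field at step t is distributed as U under M.\<close>
definition sgda_kernel :: "'w measure \<Rightarrow> ('a::euclidean_space \<Rightarrow> 'a) \<Rightarrow> ('w \<Rightarrow> 'a \<Rightarrow> 'a) \<Rightarrow> real \<Rightarrow> 'a \<Rightarrow> 'a measure"
  where "sgda_kernel M F U \<gamma> x = distr M lborel (\<lambda>\<omega>. x - \<gamma> *\<^sub>R (F x + U \<omega> x))"

text \<open>Transition kernel of SEG (double step size): the oracle is queried at x_t and at
  x_(t+1/2) with two independent draws of the noise field.\<close>
definition seg_kernel :: "'w measure \<Rightarrow> ('a::euclidean_space \<Rightarrow> 'a) \<Rightarrow> ('w \<Rightarrow> 'a \<Rightarrow> 'a) \<Rightarrow> real \<Rightarrow> real \<Rightarrow> 'a \<Rightarrow> 'a measure"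
  where "seg_kernel M F U \<gamma> \<alpha> x = distr (M \<Otimes>\<^sub>M M) lborel
     (\<lambda>(\<omega>1, \<omega>2). let xh = x - \<gamma> *\<^sub>R (F x + U \<omega>1 x)
                  in x - (\<alpha> * \<gamma>) *\<^sub>R (F xh + U \<omega>2 xh))"

definition geometric_drift :: "('a::euclidean_space \<Rightarrow> 'a measure) \<Rightarrow> ('a \<Rightarrow> real) \<Rightarrow> bool"
  where "geometric_drift P V \<longleftrightarrow>
     (\<exists>C \<beta> b. C \<in> sets borel \<and> \<beta> > 0 \<and>
        (\<forall>x. integrable (P x) V \<and>
             (\<integral>y. V y \<partial>P x) - V x \<le> - \<beta> * V x + b * indicator C x))"

end

theory Submission
  imports Defs
begin
lemma norm_add_scale_sq:
  fixes a u :: "'a::real_inner"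
  shows "(norm (a + c *\<^sub>R u))\<^sup>2 = (norm a)\<^sup>2 + 2 * c * inner a u + c\<^sup>2 * (norm u)\<^sup>2"
  unfolding power2_norm_eq_inner
  by (simp add: inner_add_left inner_add_right inner_commute power2_eq_square algebra_simps)

lemma noise_bound:
  fixes u :: "'w \<Rightarrow> 'a::euclidean_space"
  assumes P: "prob_space M" and um: "u \<in> borel_measurable M" and ui: "integrable M u"
    and m0: "(\<integral>\<omega>. u \<omega> \<partial>M) = 0"
    and var: "(\<integral>\<^sup>+\<omega>. ennreal ((norm (u \<omega>))\<^sup>2) \<partial>M) \<le> ennreal (\<sigma>\<^sup>2)"
  shows "integrable M (\<lambda>\<omega>. (norm (u \<omega>))\<^sup>2)"
    and "(\<integral>\<omega>. (norm (u \<omega>))\<^sup>2 \<partial>M) \<le> \<sigma>\<^sup>2"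
    and "integrable M (\<lambda>\<omega>. (norm (a + c *\<^sub>R u \<omega>))\<^sup>2)"
    and "(\<integral>\<omega>. (norm (a + c *\<^sub>R u \<omega>))\<^sup>2 \<partial>M) = (norm a)\<^sup>2 + c\<^sup>2 * (\<integral>\<omega>. (norm (u \<omega>))\<^sup>2 \<partial>M)"
proof -
  interpret prob_space M by (rule P)
  have fin: "(\<integral>\<^sup>+\<omega>. ennreal ((norm (u \<omega>))\<^sup>2) \<partial>M) < \<infinity>"
    using order_le_less_trans[OF var ennreal_less_top] by simp
  show i2: "integrable M (\<lambda>\<omega>. (norm (u \<omega>))\<^sup>2)"
    by (rule integrableI_bounded) (use um fin in auto)
  have "(\<integral>\<omega>. (norm (u \<omega>))\<^sup>2 \<partial>M) = enn2real (\<integral>\<^sup>+\<omega>. ennreal ((norm (u \<omega>))\<^sup>2) \<partial>M)"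
    by (rule integral_eq_nn_integral) (use um in auto)
  also have "\<dots> \<le> \<sigma>\<^sup>2"
    by (rule enn2real_leI[OF zero_le_power2 var])
  finally show "(\<integral>\<omega>. (norm (u \<omega>))\<^sup>2 \<partial>M) \<le> \<sigma>\<^sup>2" .
  have eq: "(\<lambda>\<omega>. (norm (a + c *\<^sub>R u \<omega>))\<^sup>2) = (\<lambda>\<omega>. ((norm a)\<^sup>2 + 2 * c * inner a (u \<omega>)) + c\<^sup>2 * (norm (u \<omega>))\<^sup>2)"
    by (simp add: norm_add_scale_sq)
  have i1: "integrable M (\<lambda>\<omega>. (norm a)\<^sup>2 + 2 * c * inner a (u \<omega>))"
    using ui by auto
  show "integrable M (\<lambda>\<omega>. (norm (a + c *\<^sub>R u \<omega>))\<^sup>2)"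
    unfolding eq using i1 i2 by auto
  have "(\<integral>\<omega>. (norm (a + c *\<^sub>R u \<omega>))\<^sup>2 \<partial>M) = (\<integral>\<omega>. (norm a)\<^sup>2 + 2 * c * inner a (u \<omega>) \<partial>M) + (\<integral>\<omega>. c\<^sup>2 * (norm (u \<omega>))\<^sup>2 \<partial>M)"
    unfolding eq using i1 i2 by (intro Bochner_Integration.integral_add) auto
  also have "(\<integral>\<omega>. (norm a)\<^sup>2 + 2 * c * inner a (u \<omega>) \<partial>M) = (norm a)\<^sup>2"
    using ui m0 by (simp add: prob_space)
  finally show "(\<integral>\<omega>. (norm (a + c *\<^sub>R u \<omega>))\<^sup>2 \<partial>M) = (norm a)\<^sup>2 + c\<^sup>2 * (\<integral>\<omega>. (norm (u \<omega>))\<^sup>2 \<partial>M)"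
    by simp
qed

lemma distr_nonmeas:
  fixes g :: "'b \<Rightarrow> 'a::euclidean_space"
  assumes P: "prob_space N" and nm: "g \<notin> measurable N (lborel::'a::euclidean_space measure)"
  shows "distr N lborel g = null_measure lborel"
proof -
  interpret prob_space N by (rule P)
  let ?mu = "\<lambda>A. emeasure N (g -` A \<inter> space N)"
  have nms: "\<not> measure_space (space lborel) (sets lborel) ?mu"
  proof
    assume ms: "measure_space (space lborel) (sets lborel) ?mu"
    have add: "additive (sets lborel) ?mu"
      using ms unfolding measure_space_def
      by (intro sets.countably_additive_additive) auto
    have "g \<in> measurable N lborel"
    proof (rule measurableI)
      show "g x \<in> space lborel" for x by simp
      fix A :: "'a set" assume A: "A \<in> sets lborel"
      show "g -` A \<inter> space N \<in> sets N"
      proof (rule ccontr)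
        assume nA: "g -` A \<inter> space N \<notin> sets N"
        have e: "g -` (- A) \<inter> space N = space N - (g -` A \<inter> space N)" by auto
        have nA': "g -` (-A) \<inter> space N \<notin> sets N"
        proof
          assume "g -` (-A) \<inter> space N \<in> sets N"
          then have "space N - (g -` (-A) \<inter> space N) \<in> sets N" by auto
          moreover have "space N - (g -` (-A) \<inter> space N) = g -` A \<inter> space N" by auto
          ultimately show False using nA by simp
        qed
        have cA: "-A \<in> sets lborel"
          using A sets.compl_sets[of A lborel] by (simp add: Compl_eq_Diff_UNIV)
        have disj: "A \<inter> -A = {}" by auto
        have "?mu (A \<union> -A) = ?mu A + ?mu (-A)"
          using add A cA disj unfolding additive_def by blast
        moreover have "?mu (A \<union> -A) = 1" by (simp add: emeasure_space_1)
        moreover have "?mu A = 0" "?mu (-A) = 0"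
          using emeasure_notin_sets nA nA' by auto
        ultimately show False by simp
      qed
    qed
    then show False using nm by simp
  qed
  have ss: "sigma_sets UNIV (sets borel) = sets (borel::'a measure)"
    using sets.sigma_sets_eq[of "borel::'a measure"] by simp
  show ?thesis
  proof (rule measure_eqI)
    show "sets (distr N lborel g) = sets (null_measure lborel)" by simp
    fix A assume "A \<in> sets (distr N lborel g)"
    show "emeasure (distr N lborel g) A = emeasure (null_measure lborel) A"
      unfolding distr_def emeasure_measure_of_conv
      using nms ss by simp
  qed
qed

lemma sgda_part:
  fixes F :: "'a::euclidean_space \<Rightarrow> 'a" and U :: "'w \<Rightarrow> 'a \<Rightarrow> 'a"
  assumes prob: "prob_space M"
    and lam: "lam \<ge> 0" and mu: "\<mu> > 0"
    and wqsm: "\<forall>x. inner (F x) (x - xs) \<ge> \<mu> * (norm (x - xs))\<^sup>2 - lam"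
    and U_meas: "\<forall>x. (\<lambda>\<omega>. U \<omega> x) \<in> borel_measurable M"
    and U_int: "\<forall>x. integrable M (\<lambda>\<omega>. U \<omega> x)"
    and U_mean: "\<forall>x. (\<integral>\<omega>. U \<omega> x \<partial>M) = 0"
    and U_var: "\<forall>x. (\<integral>\<^sup>+\<omega>. ennreal ((norm (U \<omega> x))\<^sup>2) \<partial>M) \<le> ennreal (\<sigma>\<^sup>2)"
    and gr: "\<forall>x. norm (F x) \<le> B * (1 + norm x)" and g0: "0 < \<gamma>" and g1: "\<gamma> < \<mu> / B\<^sup>2"
  shows "geometric_drift (sgda_kernel M F U \<gamma>) (\<lambda>x. (norm (x - xs))\<^sup>2 + 1)"
proof -
  have B2: "B\<^sup>2 > 0" using g0 g1 by (cases "B = 0") auto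
  have gB: "\<gamma> * B\<^sup>2 < \<mu>" using g1 B2 by (simp add: field_simps)
  define c where "c = 2 * \<gamma> * (\<mu> - \<gamma> * B\<^sup>2)"
  define K where "K = 2 * \<gamma> * lam + 2 * \<gamma>\<^sup>2 * B\<^sup>2 * (1 + norm xs)\<^sup>2 + \<gamma>\<^sup>2 * \<sigma>\<^sup>2"
  have c0: "c > 0" unfolding c_def using g0 gB by simp
  show ?thesis
    unfolding geometric_drift_def
  proof (rule exI[of _ UNIV], rule exI[of _ c], rule exI[of _ "c + K"], intro conjI allI)
    show "UNIV \<in> sets borel" by simp
    show "c > 0" by (rule c0)
    fix x :: 'a
    define f where "f = (\<lambda>\<omega>. x - \<gamma> *\<^sub>R (F x + U \<omega> x))"
    define z where "z = x - xs"
    define a where "a = z + (- \<gamma>) *\<^sub>R F x"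
    have um[measurable]: "(\<lambda>\<omega>. U \<omega> x) \<in> borel_measurable M" using U_meas by simp
    have fm: "f \<in> measurable M lborel" unfolding f_def measurable_lborel1 by measurable
    have Vm: "(\<lambda>y::'a. (norm (y - xs))\<^sup>2 + 1) \<in> borel_measurable lborel" by simp
    have fe: "(norm (f \<omega> - xs))\<^sup>2 + 1 = (norm (a + (-\<gamma>) *\<^sub>R U \<omega> x))\<^sup>2 + 1" for \<omega>
      unfolding f_def a_def z_def by (simp add: algebra_simps)
    note nb = noise_bound(1,2)[OF prob, where u="\<lambda>\<omega>. U \<omega> x" and \<sigma>=\<sigma>]
      noise_bound(3,4)[OF prob, where u="\<lambda>\<omega>. U \<omega> x" and \<sigma>=\<sigma> and a=a and c="-\<gamma>"]
    have nb1: "integrable M (\<lambda>\<omega>. (norm (a + (-\<gamma>) *\<^sub>R U \<omega> x))\<^sup>2)"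
      and nb2: "(\<integral>\<omega>. (norm (a + (-\<gamma>) *\<^sub>R U \<omega> x))\<^sup>2 \<partial>M) = (norm a)\<^sup>2 + \<gamma>\<^sup>2 * (\<integral>\<omega>. (norm (U \<omega> x))\<^sup>2 \<partial>M)"
      and nb3: "(\<integral>\<omega>. (norm (U \<omega> x))\<^sup>2 \<partial>M) \<le> \<sigma>\<^sup>2"
      using nb U_meas U_int U_mean U_var by auto
    interpret prob_space M by (rule prob)
    have int1: "integrable M (\<lambda>\<omega>. (norm (f \<omega> - xs))\<^sup>2 + 1)"
      unfolding fe using nb1 by auto
    show "integrable (sgda_kernel M F U \<gamma> x) (\<lambda>y. (norm (y - xs))\<^sup>2 + 1)"
      unfolding sgda_kernel_def f_def[symmetric]
      using integrable_distr_eq[OF fm Vm] int1 by simp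
    have "(\<integral>y. (norm (y - xs))\<^sup>2 + 1 \<partial>sgda_kernel M F U \<gamma> x) = (\<integral>\<omega>. (norm (f \<omega> - xs))\<^sup>2 + 1 \<partial>M)"
      unfolding sgda_kernel_def f_def[symmetric] by (rule integral_distr[OF fm Vm])
    also have "\<dots> = (\<integral>\<omega>. (norm (a + (-\<gamma>) *\<^sub>R U \<omega> x))\<^sup>2 \<partial>M) + 1"
      unfolding fe using nb1 by (simp add: prob_space)
    finally have I: "(\<integral>y. (norm (y - xs))\<^sup>2 + 1 \<partial>sgda_kernel M F U \<gamma> x) \<le> (norm a)\<^sup>2 + \<gamma>\<^sup>2 * \<sigma>\<^sup>2 + 1"
      using nb2 nb3 mult_left_mono[OF nb3, of "\<gamma>\<^sup>2"] by simp
    have a2: "(norm a)\<^sup>2 = (norm z)\<^sup>2 - 2 * \<gamma> * inner z (F x) + \<gamma>\<^sup>2 * (norm (F x))\<^sup>2"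
      unfolding a_def norm_add_scale_sq by simp
    have w: "inner z (F x) \<ge> \<mu> * (norm z)\<^sup>2 - lam"
      using wqsm unfolding z_def by (simp add: inner_commute)
    have nx: "norm x \<le> norm z + norm xs" unfolding z_def
      using norm_triangle_ineq[of "x - xs" xs] by simp
    have Fx: "norm (F x) \<le> B * (1 + norm x)" using gr by simp
    have B0: "B \<ge> 0"
    proof (rule ccontr)
      assume "\<not> B \<ge> 0"
      then have "B < 0" by simp
      moreover have "0 < 1 + norm x" using norm_ge_zero[of x] by linarith
      ultimately have "B * (1 + norm x) < 0" by (rule mult_neg_pos)
      then show False using Fx norm_ge_zero[of "F x"] by linarith
    qed
    have "(norm (F x))\<^sup>2 \<le> (B * (1 + norm x))\<^sup>2"
      using Fx by (intro power_mono) auto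
    also have "\<dots> \<le> (B * (norm z + (1 + norm xs)))\<^sup>2"
      using nx B0 by (intro power_mono mult_left_mono) auto
    also have "\<dots> \<le> B\<^sup>2 * (2 * (norm z)\<^sup>2 + 2 * (1 + norm xs)\<^sup>2)"
    proof -
      have "(norm z + (1 + norm xs))\<^sup>2 \<le> 2 * (norm z)\<^sup>2 + 2 * (1 + norm xs)\<^sup>2"
      proof -
        have "0 \<le> (norm z - (1 + norm xs))\<^sup>2" by simp
        then show ?thesis by (simp add: power2_eq_square algebra_simps)
      qed
      then show ?thesis by (simp add: power_mult_distrib mult_left_mono)
    qed
    finally have F2: "(norm (F x))\<^sup>2 \<le> B\<^sup>2 * (2 * (norm z)\<^sup>2 + 2 * (1 + norm xs)\<^sup>2)" .
    have F2': "\<gamma>\<^sup>2 * (norm (F x))\<^sup>2 \<le> \<gamma>\<^sup>2 * (B\<^sup>2 * (2 * (norm z)\<^sup>2 + 2 * (1 + norm xs)\<^sup>2))"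
      using F2 by (simp add: mult_left_mono)
    have w': "2 * \<gamma> * inner z (F x) \<ge> 2 * \<gamma> * (\<mu> * (norm z)\<^sup>2 - lam)"
      using w g0 by simp
    have "(\<integral>y. (norm (y - xs))\<^sup>2 + 1 \<partial>sgda_kernel M F U \<gamma> x) - ((norm (x - xs))\<^sup>2 + 1)
        \<le> - c * (norm z)\<^sup>2 + K"
      using I a2 F2' w' unfolding c_def K_def z_def[symmetric]
      by (simp add: algebra_simps power_mult_distrib power2_eq_square)
    also have "\<dots> = - c * ((norm (x - xs))\<^sup>2 + 1) + (c + K) * indicator UNIV x"
      unfolding z_def by (simp add: algebra_simps)
    finally show "(\<integral>y. (norm (y - xs))\<^sup>2 + 1 \<partial>sgda_kernel M F U \<gamma> x) - ((norm (x - xs))\<^sup>2 + 1)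
        \<le> - c * ((norm (x - xs))\<^sup>2 + 1) + (c + K) * indicator UNIV x" .
  qed
qed
lemma seg_det:
  fixes F :: "'a::euclidean_space \<Rightarrow> 'a"
  assumes lip: "\<And>a b. norm (F a - F b) \<le> L * norm (a - b)" and L0: "L \<ge> 0" and Fxs: "F xs = 0"
    and wq: "inner (F y) (y - xs) \<ge> \<mu> * (norm (y - xs))\<^sup>2 - lam"
    and y: "y = x - \<gamma> *\<^sub>R (F x + u)" and g0: "\<gamma> > 0" and mu: "\<mu> > 0" and a0: "0 < \<alpha>" and a1: "\<alpha> < 1"
    and gL3: "3 * (\<gamma> * L)\<^sup>2 \<le> 1" and gL1: "\<gamma> * L < 1"
  shows "(norm (x - xs - (\<alpha> * \<gamma>) *\<^sub>R F y))\<^sup>2 \<le> (1 - \<alpha> * (\<gamma> * \<mu> * (1 - \<gamma> * L)\<^sup>2)) * (norm (x - xs))\<^sup>2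
           + 2 * \<alpha> * \<gamma> * lam + \<alpha> * (2 * \<gamma> ^ 3 * \<mu> + 3 / 2 * \<gamma>\<^sup>2) * (norm u)\<^sup>2"
proof -
  define z where "z = x - xs"
  define h where "h = F y"
  define v where "v = F x + u"
  define w where "w = y - xs"
  have wz: "w = z - \<gamma> *\<^sub>R v" unfolding w_def z_def y v_def by simp
  have id: "(norm (z - \<gamma> *\<^sub>R h))\<^sup>2 = (norm z)\<^sup>2 - 2 * \<gamma> * inner h w - \<gamma>\<^sup>2 * (norm v)\<^sup>2 + \<gamma>\<^sup>2 * (norm (v - h))\<^sup>2"
    unfolding wz power2_norm_eq_inner
    by (simp add: inner_diff_left inner_diff_right inner_commute power2_eq_square algebra_simps)
  have conv: "(norm (z - (\<alpha> * \<gamma>) *\<^sub>R h))\<^sup>2 = (1 - \<alpha>) * (norm z)\<^sup>2 + \<alpha> * (norm (z - \<gamma> *\<^sub>R h))\<^sup>2 - \<alpha> * (1 - \<alpha>) * \<gamma>\<^sup>2 * (norm h)\<^sup>2"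
    unfolding power2_norm_eq_inner
    by (simp add: inner_diff_left inner_diff_right inner_commute power2_eq_square algebra_simps)
  have "0 \<le> \<alpha> * (1 - \<alpha>) * \<gamma>\<^sup>2 * (norm h)\<^sup>2" using a0 a1 by simp
  hence conv': "(norm (z - (\<alpha> * \<gamma>) *\<^sub>R h))\<^sup>2 \<le> (1 - \<alpha>) * (norm z)\<^sup>2 + \<alpha> * (norm (z - \<gamma> *\<^sub>R h))\<^sup>2"
    using conv by linarith
  have xy: "x - y = \<gamma> *\<^sub>R v" by (simp add: y v_def)
  have n1: "norm (v - h) \<le> \<gamma> * L * norm v + norm u"
  proof -
    have "v - h = (F x - F y) + u" unfolding v_def h_def by simp
    hence "norm (v - h) \<le> norm (F x - F y) + norm u" by (metis norm_triangle_ineq)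
    moreover have "norm (F x - F y) \<le> L * norm (x - y)" by (rule lip)
    moreover have "norm (x - y) = \<gamma> * norm v" using xy g0 by simp
    ultimately show ?thesis by (simp add: algebra_simps)
  qed
  have n1sq: "(norm (v - h))\<^sup>2 \<le> 3 * (\<gamma> * L)\<^sup>2 * (norm v)\<^sup>2 + 3 / 2 * (norm u)\<^sup>2"
  proof -
    have "(norm (v - h))\<^sup>2 \<le> (\<gamma> * L * norm v + norm u)\<^sup>2" using n1 by (intro power_mono) auto
    moreover have "0 \<le> 2 * (\<gamma> * L * norm v - norm u / 2)\<^sup>2" by simp
    ultimately show ?thesis by (simp add: power2_eq_square algebra_simps)
  qed
  have "3 * (\<gamma> * L)\<^sup>2 * (norm v)\<^sup>2 \<le> 1 * (norm v)\<^sup>2" using gL3 by (intro mult_right_mono) auto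
  with n1sq have X: "(norm (v - h))\<^sup>2 \<le> (norm v)\<^sup>2 + 3 / 2 * (norm u)\<^sup>2" by simp
  have "\<gamma>\<^sup>2 * (norm (v - h))\<^sup>2 \<le> \<gamma>\<^sup>2 * ((norm v)\<^sup>2 + 3 / 2 * (norm u)\<^sup>2)"
    by (rule mult_left_mono[OF X]) simp
  hence t1: "\<gamma>\<^sup>2 * (norm (v - h))\<^sup>2 \<le> \<gamma>\<^sup>2 * (norm v)\<^sup>2 + 3 / 2 * \<gamma>\<^sup>2 * (norm u)\<^sup>2"
    by (simp add: algebra_simps)
  have n2: "norm w \<ge> (1 - \<gamma> * L) * norm z - \<gamma> * norm u"
  proof -
    have Fx: "norm (F x) \<le> L * norm z" using lip[of x xs] Fxs unfolding z_def by simp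
    have e: "z = (w + \<gamma> *\<^sub>R F x) + \<gamma> *\<^sub>R u" unfolding wz v_def by (simp add: algebra_simps)
    have t1: "norm z \<le> norm (w + \<gamma> *\<^sub>R F x) + norm (\<gamma> *\<^sub>R u)"
      by (subst e) (rule norm_triangle_ineq)
    have t2: "norm (w + \<gamma> *\<^sub>R F x) \<le> norm w + norm (\<gamma> *\<^sub>R F x)" by (rule norm_triangle_ineq)
    have "norm w \<ge> norm z - norm (\<gamma> *\<^sub>R F x) - norm (\<gamma> *\<^sub>R u)"
      using t1 t2 by linarith
    moreover have "norm (\<gamma> *\<^sub>R F x) \<le> \<gamma> * (L * norm z)" using Fx g0 by (simp add: mult_left_mono)
    moreover have "norm (\<gamma> *\<^sub>R u) = \<gamma> * norm u" using g0 by simp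
    moreover have "(1 - \<gamma> * L) * norm z - \<gamma> * norm u = norm z - \<gamma> * (L * norm z) - \<gamma> * norm u"
      by (simp add: algebra_simps)
    ultimately show ?thesis by linarith
  qed
  have n2sq: "(norm w)\<^sup>2 \<ge> 1 / 2 * (1 - \<gamma> * L)\<^sup>2 * (norm z)\<^sup>2 - \<gamma>\<^sup>2 * (norm u)\<^sup>2"
  proof -
    define a where "a = (1 - \<gamma> * L) * norm z"
    define b where "b = \<gamma> * norm u"
    have a0': "a \<ge> 0" unfolding a_def using gL1 by simp
    have b0: "b \<ge> 0" unfolding b_def using g0 by simp
    have goal: "1 / 2 * a\<^sup>2 - b\<^sup>2 \<le> (norm w)\<^sup>2"
    proof (cases "a \<le> b")
      case True
      have "a\<^sup>2 \<le> b\<^sup>2" using True a0' by (intro power_mono) auto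
      moreover have "0 \<le> (norm w)\<^sup>2" "0 \<le> b\<^sup>2" by simp_all
      ultimately show ?thesis by linarith
    next
      case False
      have "(a - b)\<^sup>2 \<le> (norm w)\<^sup>2" using n2 False unfolding a_def b_def by (intro power_mono) auto
      moreover have "0 \<le> 1 / 2 * (a - 2 * b)\<^sup>2" by simp
      ultimately show ?thesis by (simp add: power2_eq_square algebra_simps)
    qed
    then show ?thesis unfolding a_def b_def by (simp add: power_mult_distrib)
  qed
  have wq': "inner h w \<ge> \<mu> * (norm w)\<^sup>2 - lam" using wq unfolding h_def w_def .
  have s1: "2 * \<gamma> * inner h w \<ge> 2 * \<gamma> * (\<mu> * (norm w)\<^sup>2 - lam)"
    using wq' g0 by simp
  have s2: "\<mu> * (norm w)\<^sup>2 \<ge> \<mu> * (1 / 2 * (1 - \<gamma> * L)\<^sup>2 * (norm z)\<^sup>2 - \<gamma>\<^sup>2 * (norm u)\<^sup>2)"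
    using n2sq mu by (intro mult_left_mono) auto
  have s2': "2 * \<gamma> * (\<mu> * (norm w)\<^sup>2) \<ge> 2 * \<gamma> * (\<mu> * (1 / 2 * (1 - \<gamma> * L)\<^sup>2 * (norm z)\<^sup>2 - \<gamma>\<^sup>2 * (norm u)\<^sup>2))"
    using s2 g0 by simp
  have zh: "(norm (z - \<gamma> *\<^sub>R h))\<^sup>2 \<le> (norm z)\<^sup>2 - \<gamma> * \<mu> * (1 - \<gamma> * L)\<^sup>2 * (norm z)\<^sup>2
       + 2 * \<gamma> * lam + (2 * \<gamma> ^ 3 * \<mu> + 3 / 2 * \<gamma>\<^sup>2) * (norm u)\<^sup>2"
    using id t1 s1 s2' by (simp add: algebra_simps power2_eq_square power3_eq_cube)
  have zh': "\<alpha> * (norm (z - \<gamma> *\<^sub>R h))\<^sup>2 \<le> \<alpha> * ((norm z)\<^sup>2 - \<gamma> * \<mu> * (1 - \<gamma> * L)\<^sup>2 * (norm z)\<^sup>2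
       + 2 * \<gamma> * lam + (2 * \<gamma> ^ 3 * \<mu> + 3 / 2 * \<gamma>\<^sup>2) * (norm u)\<^sup>2)"
    using zh a0 by (intro mult_left_mono) auto
  have eqx: "x - xs - (\<alpha> * \<gamma>) *\<^sub>R F y = z - (\<alpha> * \<gamma>) *\<^sub>R h" unfolding z_def h_def by simp
  have alg: "(1 - \<alpha>) * (norm z)\<^sup>2 + \<alpha> * ((norm z)\<^sup>2 - \<gamma> * \<mu> * (1 - \<gamma> * L)\<^sup>2 * (norm z)\<^sup>2
       + 2 * \<gamma> * lam + (2 * \<gamma> ^ 3 * \<mu> + 3 / 2 * \<gamma>\<^sup>2) * (norm u)\<^sup>2)
     = (1 - \<alpha> * (\<gamma> * \<mu> * (1 - \<gamma> * L)\<^sup>2)) * (norm z)\<^sup>2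
           + 2 * \<alpha> * \<gamma> * lam + \<alpha> * (2 * \<gamma> ^ 3 * \<mu> + 3 / 2 * \<gamma>\<^sup>2) * (norm u)\<^sup>2"
    by (simp add: algebra_simps)
  have "(norm (z - (\<alpha> * \<gamma>) *\<^sub>R h))\<^sup>2 \<le> (1 - \<alpha> * (\<gamma> * \<mu> * (1 - \<gamma> * L)\<^sup>2)) * (norm z)\<^sup>2
           + 2 * \<alpha> * \<gamma> * lam + \<alpha> * (2 * \<gamma> ^ 3 * \<mu> + 3 / 2 * \<gamma>\<^sup>2) * (norm u)\<^sup>2"
    using conv' zh' alg by linarith
  then show ?thesis unfolding eqx z_def .
qed
lemma seg_part:
  fixes F :: "'a::euclidean_space \<Rightarrow> 'a" and U :: "'w \<Rightarrow> 'a \<Rightarrow> 'a"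
  assumes prob: "prob_space M"
    and lam: "lam \<ge> 0" and mu: "\<mu> > 0" and Fxs: "F xs = 0"
    and wqsm: "\<forall>x. inner (F x) (x - xs) \<ge> \<mu> * (norm (x - xs))\<^sup>2 - lam"
    and U_meas: "\<forall>x. (\<lambda>\<omega>. U \<omega> x) \<in> borel_measurable M"
    and U_int: "\<forall>x. integrable M (\<lambda>\<omega>. U \<omega> x)"
    and U_mean: "\<forall>x. (\<integral>\<omega>. U \<omega> x \<partial>M) = 0"
    and U_var: "\<forall>x. (\<integral>\<^sup>+\<omega>. ennreal ((norm (U \<omega> x))\<^sup>2) \<partial>M) \<le> ennreal (\<sigma>\<^sup>2)"
    and lip: "L-lipschitz_on UNIV F" and g0: "0 < \<gamma>" and g1: "\<gamma> < 1 / (2 * \<mu> + sqrt 3 * L)"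
    and a0: "0 < \<alpha>" and a1: "\<alpha> < 1"
  shows "geometric_drift (seg_kernel M F U \<gamma> \<alpha>) (\<lambda>x. (norm (x - xs))\<^sup>2 + 1)"
proof -
  interpret Mp: prob_space M by (rule prob)
  have L0: "L \<ge> 0" using lip by (rule lipschitz_on_nonneg)
  have lipn: "\<And>a b. norm (F a - F b) \<le> L * norm (a - b)"
    using lip by (intro lipschitz_on_normD) auto
  have Fcont: "continuous_on UNIV F" using lip by (rule lipschitz_on_continuous_on)
  have Fm[measurable]: "F \<in> borel_measurable borel" using Fcont by (rule borel_measurable_continuous_onI)
  have s3: "sqrt 3 \<ge> (1::real)" by simp
  define d where "d = 2 * \<mu> + sqrt 3 * L"
  have d0: "d > 0" unfolding d_def using mu L0 by (simp add: add_pos_nonneg)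
  have gd: "\<gamma> * d < 1" using g1 d0 unfolding d_def[symmetric] by (simp add: field_simps)
  have e: "\<gamma> * d = 2 * (\<gamma> * \<mu>) + sqrt 3 * (\<gamma> * L)" unfolding d_def by (simp add: algebra_simps)
  have p1: "0 \<le> sqrt 3 * (\<gamma> * L)" using g0 L0 by simp
  have p2: "0 \<le> \<gamma> * \<mu>" using g0 mu by simp
  have sL: "sqrt 3 * (\<gamma> * L) < 1" and gm2: "2 * (\<gamma> * \<mu>) < 1"
    using gd e p1 p2 by linarith+
  have gL0: "\<gamma> * L \<ge> 0" using g0 L0 by simp
  have gL1: "\<gamma> * L < 1"
  proof -
    have "\<gamma> * L \<le> sqrt 3 * (\<gamma> * L)" using mult_right_mono[OF s3 gL0] by simp
    then show ?thesis using sL by simp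
  qed
  have gL3: "3 * (\<gamma> * L)\<^sup>2 \<le> 1"
  proof -
    have "(sqrt 3 * (\<gamma> * L))\<^sup>2 \<le> 1\<^sup>2" using sL gL0 by (intro power_mono) auto
    then show ?thesis by (simp add: power_mult_distrib)
  qed
  define cc where "cc = \<gamma> * \<mu> * (1 - \<gamma> * L)\<^sup>2"
  have cc0: "cc > 0" unfolding cc_def using g0 mu gL1 by simp
  have cc1: "cc \<le> 1"
  proof -
    have "(1 - \<gamma> * L)\<^sup>2 \<le> 1\<^sup>2" using gL1 gL0 by (intro power_mono) auto
    then have "cc \<le> \<gamma> * \<mu> * 1" unfolding cc_def using g0 mu by (intro mult_left_mono) auto
    then show ?thesis using gm2 by simp
  qed
  define \<beta> where "\<beta> = \<alpha> * cc"
  have b0: "\<beta> > 0" unfolding \<beta>_def using a0 cc0 by simp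
  have b1: "\<beta> \<le> 1" unfolding \<beta>_def
    by (rule mult_le_one) (use a1 cc0 cc1 in auto)
  define D where "D = \<alpha> * (2 * \<gamma> ^ 3 * \<mu> + 3 / 2 * \<gamma>\<^sup>2)"
  have D0: "D \<ge> 0" unfolding D_def using a0 g0 mu by simp
  define K where "K = 2 * \<alpha> * \<gamma> * lam + D * \<sigma>\<^sup>2 + (\<alpha> * \<gamma>)\<^sup>2 * \<sigma>\<^sup>2"
  have K0: "K \<ge> 0" unfolding K_def using a0 g0 lam D0 by simp
  have pp: "prob_space (M \<Otimes>\<^sub>M M)" by (rule prob_space_pair[OF prob prob])
  show ?thesis
    unfolding geometric_drift_def
  proof (rule exI[of _ UNIV], rule exI[of _ \<beta>], rule exI[of _ "\<beta> + K"], intro conjI allI)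
    show "UNIV \<in> sets borel" by simp
    show "\<beta> > 0" by (rule b0)
    fix x :: 'a
    define V where "V = (\<lambda>y::'a. (norm (y - xs))\<^sup>2 + 1)"
    have Vm[measurable]: "V \<in> borel_measurable borel" unfolding V_def by simp
    have V1: "V x \<ge> 1" unfolding V_def by simp
    define g where "g = (\<lambda>(\<omega>1, \<omega>2). let xh = x - \<gamma> *\<^sub>R (F x + U \<omega>1 x)
                  in x - (\<alpha> * \<gamma>) *\<^sub>R (F xh + U \<omega>2 xh))"
    have ker: "seg_kernel M F U \<gamma> \<alpha> x = distr (M \<Otimes>\<^sub>M M) lborel g"
      unfolding seg_kernel_def g_def ..
    have "integrable (seg_kernel M F U \<gamma> \<alpha> x) V \<and>
          (\<integral>y. V y \<partial>seg_kernel M F U \<gamma> \<alpha> x) - V x \<le> - \<beta> * V x + (\<beta> + K) * indicator UNIV x"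
    proof (cases "g \<in> measurable (M \<Otimes>\<^sub>M M) lborel")
      case False
      have "seg_kernel M F U \<gamma> \<alpha> x = null_measure lborel"
        unfolding ker by (rule distr_nonmeas[OF pp False])
      moreover have "(\<beta> - 1) * V x \<le> 0" using b1 V1 by (simp add: mult_nonpos_nonneg)
      ultimately show ?thesis using K0 b0 by (simp add: algebra_simps)
    next
      case True
      have gm[measurable]: "g \<in> borel_measurable (M \<Otimes>\<^sub>M M)" using True by simp
      define yv where "yv = (\<lambda>\<omega>1. x - \<gamma> *\<^sub>R (F x + U \<omega>1 x))"
      have gval: "g (\<omega>1, \<omega>2) = x - (\<alpha> * \<gamma>) *\<^sub>R (F (yv \<omega>1) + U \<omega>2 (yv \<omega>1))" for \<omega>1 \<omega>2
        unfolding g_def yv_def by (simp add: Let_def)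
      have um[measurable]: "(\<lambda>\<omega>. U \<omega> x) \<in> borel_measurable M" using U_meas by simp
      have yvm[measurable]: "yv \<in> borel_measurable M" unfolding yv_def by measurable
      define z where "z = x - xs"
      have inner: "(\<integral>\<^sup>+\<omega>2. ennreal (V (g (\<omega>1, \<omega>2))) \<partial>M)
          \<le> ennreal ((norm (z - (\<alpha> * \<gamma>) *\<^sub>R F (yv \<omega>1)))\<^sup>2 + (\<alpha> * \<gamma>)\<^sup>2 * \<sigma>\<^sup>2 + 1)" for \<omega>1
      proof -
        define y where "y = yv \<omega>1"
        define a where "a = z - (\<alpha> * \<gamma>) *\<^sub>R F y"
        have ve: "V (g (\<omega>1, \<omega>2)) = (norm (a + (- (\<alpha> * \<gamma>)) *\<^sub>R U \<omega>2 y))\<^sup>2 + 1" for \<omega>2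
          unfolding V_def gval a_def z_def y_def by (simp add: algebra_simps)
        note nb = noise_bound(1,2)[OF prob, where u="\<lambda>\<omega>. U \<omega> y" and \<sigma>=\<sigma>]
          noise_bound(3,4)[OF prob, where u="\<lambda>\<omega>. U \<omega> y" and \<sigma>=\<sigma> and a=a and c="- (\<alpha> * \<gamma>)"]
        have nb1: "integrable M (\<lambda>\<omega>. (norm (a + (- (\<alpha> * \<gamma>)) *\<^sub>R U \<omega> y))\<^sup>2)"
          and nb2: "(\<integral>\<omega>. (norm (a + (- (\<alpha> * \<gamma>)) *\<^sub>R U \<omega> y))\<^sup>2 \<partial>M) = (norm a)\<^sup>2 + (\<alpha> * \<gamma>)\<^sup>2 * (\<integral>\<omega>. (norm (U \<omega> y))\<^sup>2 \<partial>M)"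
          and nb3: "(\<integral>\<omega>. (norm (U \<omega> y))\<^sup>2 \<partial>M) \<le> \<sigma>\<^sup>2"
          using nb U_meas U_int U_mean U_var by auto
        have int1: "integrable M (\<lambda>\<omega>. (norm (a + (- (\<alpha> * \<gamma>)) *\<^sub>R U \<omega> y))\<^sup>2 + 1)"
          using nb1 by auto
        have "(\<integral>\<^sup>+\<omega>2. ennreal (V (g (\<omega>1, \<omega>2))) \<partial>M)
            = (\<integral>\<^sup>+\<omega>2. ennreal ((norm (a + (- (\<alpha> * \<gamma>)) *\<^sub>R U \<omega>2 y))\<^sup>2 + 1) \<partial>M)"
          by (simp add: ve)
        also have "\<dots> = ennreal (\<integral>\<omega>. (norm (a + (- (\<alpha> * \<gamma>)) *\<^sub>R U \<omega> y))\<^sup>2 + 1 \<partial>M)"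
          by (rule nn_integral_eq_integral[OF int1]) auto
        also have "(\<integral>\<omega>. (norm (a + (- (\<alpha> * \<gamma>)) *\<^sub>R U \<omega> y))\<^sup>2 + 1 \<partial>M)
             = (norm a)\<^sup>2 + (\<alpha> * \<gamma>)\<^sup>2 * (\<integral>\<omega>. (norm (U \<omega> y))\<^sup>2 \<partial>M) + 1"
          using nb1 nb2 by (simp add: Mp.prob_space)
        also have "\<dots> \<le> (norm a)\<^sup>2 + (\<alpha> * \<gamma>)\<^sup>2 * \<sigma>\<^sup>2 + 1"
          using mult_left_mono[OF nb3, of "(\<alpha> * \<gamma>)\<^sup>2"] by simp
        finally show ?thesis unfolding a_def y_def by (simp add: ennreal_leI)
      qed
      define Q where "Q = (1 - \<beta>) * (norm z)\<^sup>2 + 2 * \<alpha> * \<gamma> * lam + (\<alpha> * \<gamma>)\<^sup>2 * \<sigma>\<^sup>2 + 1"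
      have pw: "(norm (z - (\<alpha> * \<gamma>) *\<^sub>R F (yv \<omega>1)))\<^sup>2 + (\<alpha> * \<gamma>)\<^sup>2 * \<sigma>\<^sup>2 + 1
           \<le> Q + D * (norm (U \<omega>1 x))\<^sup>2" for \<omega>1
      proof -
        have wq: "inner (F (yv \<omega>1)) (yv \<omega>1 - xs) \<ge> \<mu> * (norm (yv \<omega>1 - xs))\<^sup>2 - lam"
          using wqsm by simp
        have "(norm (x - xs - (\<alpha> * \<gamma>) *\<^sub>R F (yv \<omega>1)))\<^sup>2 \<le> (1 - \<alpha> * (\<gamma> * \<mu> * (1 - \<gamma> * L)\<^sup>2)) * (norm (x - xs))\<^sup>2
           + 2 * \<alpha> * \<gamma> * lam + \<alpha> * (2 * \<gamma> ^ 3 * \<mu> + 3 / 2 * \<gamma>\<^sup>2) * (norm (U \<omega>1 x))\<^sup>2"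
          by (rule seg_det[OF lipn L0 Fxs wq _ g0 mu a0 a1 gL3 gL1]) (simp add: yv_def)
        then show ?thesis unfolding Q_def \<beta>_def cc_def D_def z_def by simp
      qed
      note nbx = noise_bound(1,2)[OF prob, where u="\<lambda>\<omega>. U \<omega> x" and \<sigma>=\<sigma>]
      have nx1: "integrable M (\<lambda>\<omega>. (norm (U \<omega> x))\<^sup>2)"
        and nx3: "(\<integral>\<omega>. (norm (U \<omega> x))\<^sup>2 \<partial>M) \<le> \<sigma>\<^sup>2"
        using nbx U_meas U_int U_mean U_var by auto
      have intQ: "integrable M (\<lambda>\<omega>. Q + D * (norm (U \<omega> x))\<^sup>2)" using nx1 by auto
      have Q0: "Q + D * (norm (U \<omega> x))\<^sup>2 \<ge> 0" for \<omega>
      proof -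
        have "0 \<le> (norm (z - (\<alpha> * \<gamma>) *\<^sub>R F (yv \<omega>)))\<^sup>2 + (\<alpha> * \<gamma>)\<^sup>2 * \<sigma>\<^sup>2 + 1"
          by (intro add_nonneg_nonneg mult_nonneg_nonneg) simp_all
        then show ?thesis using pw[of \<omega>] by linarith
      qed
      define T where "T = Q + D * \<sigma>\<^sup>2"
      have T0: "T \<ge> 0" unfolding T_def Q_def using b1 lam a0 g0 D0
        by (intro add_nonneg_nonneg mult_nonneg_nonneg) auto
      have Vgm: "(\<lambda>p. ennreal (V (g p))) \<in> borel_measurable (M \<Otimes>\<^sub>M M)" by measurable
      have "(\<integral>\<^sup>+p. ennreal (V (g p)) \<partial>(M \<Otimes>\<^sub>M M)) = (\<integral>\<^sup>+\<omega>1. \<integral>\<^sup>+\<omega>2. ennreal (V (g (\<omega>1, \<omega>2))) \<partial>M \<partial>M)"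
        by (rule Mp.nn_integral_fst[OF Vgm, symmetric])
      also have "\<dots> \<le> (\<integral>\<^sup>+\<omega>1. ennreal (Q + D * (norm (U \<omega>1 x))\<^sup>2) \<partial>M)"
      proof (rule nn_integral_mono)
        fix \<omega>1
        show "(\<integral>\<^sup>+\<omega>2. ennreal (V (g (\<omega>1, \<omega>2))) \<partial>M) \<le> ennreal (Q + D * (norm (U \<omega>1 x))\<^sup>2)"
          using inner[of \<omega>1] ennreal_leI[OF pw[of \<omega>1]] unfolding z_def by (rule order_trans)
      qed
      also have "\<dots> = ennreal (\<integral>\<omega>. Q + D * (norm (U \<omega> x))\<^sup>2 \<partial>M)"
        by (rule nn_integral_eq_integral[OF intQ]) (use Q0 in auto)
      also have "(\<integral>\<omega>. Q + D * (norm (U \<omega> x))\<^sup>2 \<partial>M) = Q + D * (\<integral>\<omega>. (norm (U \<omega> x))\<^sup>2 \<partial>M)"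
        using nx1 by (simp add: Mp.prob_space)
      also have "\<dots> \<le> T" unfolding T_def using mult_left_mono[OF nx3 D0] by simp
      finally have NN: "(\<integral>\<^sup>+p. ennreal (V (g p)) \<partial>(M \<Otimes>\<^sub>M M)) \<le> ennreal T" by (simp add: ennreal_leI)
      have Vpos: "V y \<ge> 0" for y unfolding V_def by simp
      have fin: "(\<integral>\<^sup>+p. ennreal (V (g p)) \<partial>(M \<Otimes>\<^sub>M M)) < \<infinity>"
        using order_le_less_trans[OF NN ennreal_less_top] by simp
      have intg: "integrable (M \<Otimes>\<^sub>M M) (\<lambda>p. V (g p))"
        unfolding integrable_iff_bounded using fin Vpos by simp
      have "(\<integral>p. V (g p) \<partial>(M \<Otimes>\<^sub>M M)) = enn2real (\<integral>\<^sup>+p. ennreal (V (g p)) \<partial>(M \<Otimes>\<^sub>M M))"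
        by (rule integral_eq_nn_integral) (use Vpos in auto)
      also have "\<dots> \<le> T" by (rule enn2real_leI[OF T0 NN])
      finally have IT: "(\<integral>p. V (g p) \<partial>(M \<Otimes>\<^sub>M M)) \<le> T" .
      have gm2: "g \<in> measurable (M \<Otimes>\<^sub>M M) lborel" by (rule True)
      have Vm2: "V \<in> borel_measurable lborel" by simp
      show ?thesis
      proof
        show "integrable (seg_kernel M F U \<gamma> \<alpha> x) V"
          unfolding ker using integrable_distr_eq[OF gm2 Vm2] intg by simp
        have "(\<integral>y. V y \<partial>seg_kernel M F U \<gamma> \<alpha> x) = (\<integral>p. V (g p) \<partial>(M \<Otimes>\<^sub>M M))"
          unfolding ker by (rule integral_distr[OF gm2 Vm2])
        with IT have "(\<integral>y. V y \<partial>seg_kernel M F U \<gamma> \<alpha> x) \<le> T" by simp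
        moreover have "V x = (norm z)\<^sup>2 + 1" unfolding V_def z_def ..
        ultimately show "(\<integral>y. V y \<partial>seg_kernel M F U \<gamma> \<alpha> x) - V x \<le> - \<beta> * V x + (\<beta> + K) * indicator UNIV x"
          unfolding T_def Q_def K_def by (simp add: algebra_simps)
      qed
    qed
    note H = this
    show "integrable (seg_kernel M F U \<gamma> \<alpha> x) (\<lambda>y. (norm (y - xs))\<^sup>2 + 1)"
      using H unfolding V_def by blast
    show "(\<integral>y. (norm (y - xs))\<^sup>2 + 1 \<partial>seg_kernel M F U \<gamma> \<alpha> x) - ((norm (x - xs))\<^sup>2 + 1)
           \<le> - \<beta> * ((norm (x - xs))\<^sup>2 + 1) + (\<beta> + K) * indicator UNIV x"
      using H unfolding V_def by blast
  qed
qed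


theorem corollary2:
  fixes F :: "'a::euclidean_space \<Rightarrow> 'a"
    and M :: "'w measure"
    and U Ua Ub :: "'w \<Rightarrow> 'a \<Rightarrow> 'a"
    and p :: "'a \<Rightarrow> 'a \<Rightarrow> ennreal"
    and xs :: 'a
    and R lam \<mu> \<sigma> \<gamma> \<alpha> B L :: real
  assumes prob: "prob_space M"
    and sol: "\<exists>x0. F x0 = 0 \<and> norm x0 \<le> R"
    and xs_sol: "F xs = 0"
    and lam: "lam \<ge> 0" and mu: "\<mu> > 0"
    and wqsm: "\<forall>x. inner (F x) (x - xs) \<ge> \<mu> * (norm (x - xs))\<^sup>2 - lam"
    and U_meas: "\<forall>x. (\<lambda>\<omega>. U \<omega> x) \<in> borel_measurable M"
    and U_int: "\<forall>x. integrable M (\<lambda>\<omega>. U \<omega> x)"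
    and U_mean: "\<forall>x. (\<integral>\<omega>. U \<omega> x \<partial>M) = 0"
    and U_var: "\<forall>x. (\<integral>\<^sup>+\<omega>. ennreal ((norm (U \<omega> x))\<^sup>2) \<partial>M) \<le> ennreal (\<sigma>\<^sup>2)"
    and U_split: "\<forall>\<omega> x. U \<omega> x = Ua \<omega> x + Ub \<omega> x"
    and Ua_dens: "\<forall>x. distributed M lborel (\<lambda>\<omega>. Ua \<omega> x) (p x)"
    and Ua_pos: "\<forall>C t. bounded C \<longrightarrow> (INF x\<in>C. p x t) > 0"
  shows "((\<forall>x. norm (F x) \<le> B * (1 + norm x)) \<and> 0 < \<gamma> \<and> \<gamma> < \<mu> / B\<^sup>2 \<longrightarrow>
            geometric_drift (sgda_kernel M F U \<gamma>) (\<lambda>x. (norm (x - xs))\<^sup>2 + 1))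
       \<and> (L-lipschitz_on UNIV F \<and> 0 < \<gamma> \<and> \<gamma> < 1 / (2 * \<mu> + sqrt 3 * L) \<and> 0 < \<alpha> \<and> \<alpha> < 1 \<longrightarrow>
            geometric_drift (seg_kernel M F U \<gamma> \<alpha>) (\<lambda>x. (norm (x - xs))\<^sup>2 + 1))"
  proof (intro conjI impI)
  assume h: "(\<forall>x. norm (F x) \<le> B * (1 + norm x)) \<and> 0 < \<gamma> \<and> \<gamma> < \<mu> / B\<^sup>2"
  show "geometric_drift (sgda_kernel M F U \<gamma>) (\<lambda>x. (norm (x - xs))\<^sup>2 + 1)"
    by (rule sgda_part[OF prob lam mu wqsm U_meas U_int U_mean U_var conjunct1[OF h] conjunct1[OF conjunct2[OF h]] conjunct2[OF conjunct2[OF h]]])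
next
  assume h: "L-lipschitz_on UNIV F \<and> 0 < \<gamma> \<and> \<gamma> < 1 / (2 * \<mu> + sqrt 3 * L) \<and> 0 < \<alpha> \<and> \<alpha> < 1"
  show "geometric_drift (seg_kernel M F U \<gamma> \<alpha>) (\<lambda>x. (norm (x - xs))\<^sup>2 + 1)"
    by (rule seg_part[OF prob lam mu xs_sol wqsm U_meas U_int U_mean U_var conjunct1[OF h] conjunct1[OF conjunct2[OF h]]
        conjunct1[OF conjunct2[OF conjunct2[OF h]]] conjunct1[OF conjunct2[OF conjunct2[OF conjunct2[OF h]]]] conjunct2[OF conjunct2[OF conjunct2[OF conjunct2[OF h]]]]])
qed

end
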